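(* Let $n\ge 2$, let $\mathcal{Y}=\{C^{(1)},\dots,C^{(n)}\}$ be a set of classes, let $E$ be a set of ordered pairs of distinct classes, and let $g:E\to\mathbb{R}$. Then the following are equivalent: (a) there exist a finite alphabet $\mathcal{U}=[k]$, a probability table $\{\mathbf{p}_u\}_{u\in\mathcal{U}}$ with every $\mathbf{p}_u\in(0,1)^n$ and $\sum_i p_u^{(i)}=1$, and a probability distribution $d$ on $\mathcal{U}$ such that $f_d(e)=g(e)$ for all $e\in E$; (b) there exists a point $x$ in the interior $\mathrm{Co}(\mathcal{H_R})$ of the linear ordering polytope such that $x(e)=g(e)$ for all $e\in E$.
   Context: Situational opinions: for $u\in\mathcal{U}$ and distinct $i,j$, $f_u(C^{(i)},C^{(j)})=p_u^{(i)}/(p_u^{(i)}+p_u^{(j)})$. Overall opinions (expert graph edge-weights): $f_d(e)=\sum_{u\in\mathcal{U}}d(u)f_u(e)$. Rankings: for a permutation $r=(r_1,\dots,r_n)$ of $[n]$, the ranking graph has weights $f_r(C^{(r_a)},C^{(r_b)})=1$ if $a<b$ and $0$ if $a>b$. Identify any weighting $x$ of ordered pairs satisfying $x(C^{(j)},C^{(i)})=1-x(C^{(i)},C^{(j)})$ with the vector $(x(C^{(i)},C^{(j)}))_{i<j}\in\mathbb{R}^{n(n-1)/2}$. The linear ordering polytope is the convex hull of the $n!$ vectors $f_r$; $\mathrm{Co}(\mathcal{H_R})$ denotes its (open) interior in $\mathbb{R}^{n(n-1)/2}$, i.e. the open convex hull of the ranking vectors. *)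

theory Defs
  imports "HOL-Analysis.Analysis"
begin

text \<open>Classes are the elements of a finite linearly ordered type 'c
(C^(1) < ... < C^(n) with n = CARD('c)). A weighting of the ordered pairs
with x(j,i) = 1 - x(i,j) is identified with its coordinates x(i,j), i<j.
We realise R^(n(n-1)/2) as the coordinate subspace pair_space of
real^('c \<times> 'c) whose coordinates off {(i,j). i<j} vanish.\<close>

definition pair_space :: "(real ^ ('c::{finite,linorder} \<times> 'c)) set" where
  "pair_space = {v. \<forall>i j. \<not> i < j \<longrightarrow> v $ (i, j) = 0}"

definition pair_weight :: "real ^ ('c::{finite,linorder} \<times> 'c) \<Rightarrow> 'c \<times> 'c \<Rightarrow> real" where
  "pair_weight v e = (if fst e < snd e then v $ e else 1 - v $ (snd e, fst e))"

text \<open>Ranking vector: pos c is the (0-based) rank position of class c, a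
bijection onto {0..<n}; f_r(C,C') = 1 iff C is ranked before C'.\<close>
definition ranking_vec :: "('c::{finite,linorder} \<Rightarrow> nat) \<Rightarrow> real ^ ('c \<times> 'c)" where
  "ranking_vec pos = (\<chi> e. if fst e < snd e then (if pos (fst e) < pos (snd e) then 1 else 0) else 0)"

definition ranking_vecs :: "(real ^ ('c::{finite,linorder} \<times> 'c)) set" where
  "ranking_vecs = {ranking_vec pos | pos. bij_betw pos (UNIV :: 'c set) {0..<CARD('c)}}"

definition linear_ordering_polytope :: "(real ^ ('c::{finite,linorder} \<times> 'c)) set" where
  "linear_ordering_polytope = convex hull ranking_vecs"

definition Co_HR :: "(real ^ ('c::{finite,linorder} \<times> 'c)) set" where
  "Co_HR = (top_of_set pair_space) interior_of linear_ordering_polytope"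

definition overall_opinion ::
  "nat \<Rightarrow> (nat \<Rightarrow> 'c \<Rightarrow> real) \<Rightarrow> (nat \<Rightarrow> real) \<Rightarrow> 'c \<times> 'c \<Rightarrow> real" where
  "overall_opinion k p d e = (\<Sum>u<k. d u * (p u (fst e) / (p u (fst e) + p u (snd e))))"

end

theory Submission imports Defs begin

lemma rank_lemma:
  fixes pos :: "'c::{finite,linorder} \<Rightarrow> nat"
  assumes "inj pos"
  shows "ranking_vec pos \<in> ranking_vecs"
proof -
  define r where "r c = card {c'. pos c' < pos c}" for c
  have mono: "r a < r b" if "pos a < pos b" for a b
  proof -
    have "{c'. pos c' < pos a} \<subset> {c'. pos c' < pos b}" using that by auto
    then show ?thesis unfolding r_def by (intro psubset_card_mono) auto
  qed
  have iff: "r a < r b \<longleftrightarrow> pos a < pos b" for a b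
  proof
    assume "pos a < pos b" then show "r a < r b" by (rule mono)
  next
    assume ab: "r a < r b"
    show "pos a < pos b"
    proof (rule ccontr)
      assume "\<not> pos a < pos b"
      then have "pos b < pos a \<or> pos a = pos b" by auto
      then show False
      proof
        assume "pos b < pos a" then have "r b < r a" by (rule mono)
        then show False using ab by simp
      next
        assume "pos a = pos b" then have "a = b" using assms by (simp add: inj_eq)
        then show False using ab by simp
      qed
    qed
  qed
  have injr: "inj r"
  proof (rule injI)
    fix a b assume rab: "r a = r b"
    show "a = b"
    proof (rule ccontr)
      assume "a \<noteq> b"
      then have "pos a \<noteq> pos b" using assms by (simp add: inj_eq)
      then have "pos a < pos b \<or> pos b < pos a" by auto
      then show False using mono rab by (metis less_irrefl)
    qed
  qed
  have sub: "range r \<subseteq> {0..<CARD('c)}"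
  proof
    fix y assume "y \<in> range r"
    then obtain c where y: "y = r c" by auto
    have "{c'. pos c' < pos c} \<subset> UNIV" by auto
    then have "card {c'. pos c' < pos c} < CARD('c)" by (intro psubset_card_mono) auto
    then show "y \<in> {0..<CARD('c)}" using y r_def by auto
  qed
  have "card (range r) = CARD('c)" using injr by (simp add: card_image)
  then have "range r = {0..<CARD('c)}" using sub by (intro card_subset_eq) auto
  then have bij: "bij_betw r UNIV {0..<CARD('c)}" using injr by (simp add: bij_betw_def)
  have eq: "ranking_vec r = ranking_vec pos" unfolding ranking_vec_def by (simp only: iff)
  have "ranking_vec r \<in> ranking_vecs" unfolding ranking_vecs_def using bij by blast
  then show ?thesis using eq by simp
qed

lemma ranking_vecs_inj:
  "v \<in> ranking_vecs \<Longrightarrow> \<exists>pos. inj pos \<and> v = ranking_vec pos"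
  unfolding ranking_vecs_def bij_betw_def by auto

lemma pw_rank:
  fixes pos :: "'c::{finite,linorder} \<Rightarrow> nat"
  assumes "inj pos" "i \<noteq> j"
  shows "pair_weight (ranking_vec pos) (i, j) = (if pos i < pos j then 1 else 0)"
proof -
  have "pos i \<noteq> pos j" using assms by (simp add: inj_eq)
  then show ?thesis using assms(2) unfolding pair_weight_def ranking_vec_def
    by (auto simp: not_less_iff_gr_or_eq)
qed

lemma finite_ranking_vecs: "finite (ranking_vecs :: (real ^ ('c::{finite,linorder} \<times> 'c)) set)"
proof -
  have "ranking_vecs \<subseteq> range (\<lambda>f::('c \<times> 'c) \<Rightarrow> bool. (\<chi> e. if f e then 1 else 0) :: real ^ ('c \<times> 'c))"
  proof
    fix v :: "real ^ ('c \<times> 'c)" assume "v \<in> ranking_vecs"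
    then obtain pos where "v = ranking_vec pos" unfolding ranking_vecs_def by auto
    then have "v = (\<chi> e. if (fst e < snd e \<and> pos (fst e) < pos (snd e)) then 1 else 0)"
      unfolding ranking_vec_def by (simp add: vec_eq_iff)
    then show "v \<in> range (\<lambda>f::('c \<times> 'c) \<Rightarrow> bool. (\<chi> e. if f e then 1 else 0) :: real ^ ('c \<times> 'c))"
      by (intro range_eqI[where x="\<lambda>e. fst e < snd e \<and> pos (fst e) < pos (snd e)"])
  qed
  then show ?thesis by (rule finite_subset) (rule finite_imageI, rule finite_class.finite_UNIV)
qed

lemma ranking_vecs_ne: "(ranking_vecs :: (real ^ ('c::{finite,linorder} \<times> 'c)) set) \<noteq> {}"
  using rank_lemma[of "to_nat :: 'c \<Rightarrow> nat"] by auto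

lemma ranking_vecs_pair: "ranking_vecs \<subseteq> pair_space"
  unfolding ranking_vecs_def pair_space_def ranking_vec_def by auto

lemma subspace_pair_space: "subspace pair_space"
  unfolding subspace_def pair_space_def by auto

lemma pair_space_sum:
  fixes v :: "real ^ ('c::{finite,linorder} \<times> 'c)"
  assumes "v \<in> pair_space"
  shows "v = (\<Sum>e\<in>{e. fst e < snd e}. v $ e *\<^sub>R axis e 1)"
proof -
  have "v $ e' = (\<Sum>e\<in>{e. fst e < snd e}. v $ e *\<^sub>R axis e 1) $ e'" for e'
  proof -
    have "(\<Sum>e\<in>{e. fst e < snd e}. v $ e *\<^sub>R axis e 1) $ e' =
       (\<Sum>e\<in>{e. fst e < snd e}. v $ e * (axis e (1::real) :: real ^ ('c \<times> 'c)) $ e')"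
      by (simp add: sum_component)
    also have "\<dots> = (\<Sum>e\<in>{e. fst e < snd e}. if e = e' then v $ e else 0)"
      by (intro sum.cong refl) (simp add: axis_def)
    also have "\<dots> = (if e' \<in> {e. fst e < snd e} then v $ e' else 0)"
      by (rule sum.delta[OF finite])
    also have "\<dots> = v $ e'" using assms unfolding pair_space_def
      by (cases e') auto
    finally show ?thesis by (rule sym)
  qed
  then show ?thesis unfolding vec_eq_iff by blast
qed

lemma affine_hull_rv: "affine hull (ranking_vecs :: (real ^ ('c::{finite,linorder} \<times> 'c)) set) = pair_space"
proof
  show "affine hull ranking_vecs \<subseteq> (pair_space :: (real ^ ('c \<times> 'c)) set)"
    by (rule hull_minimal[where S=affine, OF ranking_vecs_pair subspace_imp_affine[OF subspace_pair_space]])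
next
  have "\<exists>a0. a0 \<in> (ranking_vecs :: (real ^ ('c \<times> 'c)) set)"
    using ranking_vecs_ne by (simp add: ex_in_conv)
  then obtain a0 :: "real ^ ('c \<times> 'c)" where a0: "a0 \<in> ranking_vecs" by (elim exE)
  define A where "A = affine hull (ranking_vecs :: (real ^ ('c \<times> 'c)) set)"
  have a0A: "a0 \<in> A" unfolding A_def by (rule hull_inc[OF a0])
  define D where "D = (\<lambda>x. x - a0) ` A"
  have sD: "subspace D" unfolding D_def A_def
    by (rule affine_diffs_subspace_subtract[OF affine_affine_hull]) (rule hull_inc[OF a0])
  have ax: "axis e 1 \<in> D" if "fst e < snd e" for e :: "'c \<times> 'c"
  proof -
    obtain i j where e: "e = (i, j)" by (cases e)
    have ij: "i < j" using that e by simp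
    define t where "t c = Suc (Suc (to_nat c))" for c :: 'c
    have t2: "2 \<le> t c" for c unfolding t_def by simp
    have tinj: "t a = t b \<longleftrightarrow> a = b" for a b unfolding t_def by (simp add: inj_eq[OF inj_to_nat])
    define pos where "pos c = (if c = i then 0 else if c = j then 1 else t c)" for c :: 'c
    define pos' where "pos' c = (if c = i then 1 else if c = j then 0 else t c)" for c :: 'c
    have ip: "inj pos"
    proof (rule injI)
      fix a b assume "pos a = pos b" then show "a = b"
        using ij t2[of a] t2[of b] tinj[of a b] unfolding pos_def by (auto split: if_splits)
    qed
    have ip': "inj pos'"
    proof (rule injI)
      fix a b assume "pos' a = pos' b" then show "a = b"
        using ij t2[of a] t2[of b] tinj[of a b] unfolding pos'_def by (auto split: if_splits)
    qed
    have r1: "ranking_vec pos \<in> A" unfolding A_def by (rule hull_inc[OF rank_lemma[OF ip]])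
    have r2: "ranking_vec pos' \<in> A" unfolding A_def by (rule hull_inc[OF rank_lemma[OF ip']])
    have "ranking_vec pos - ranking_vec pos' = (axis e 1 :: real ^ ('c \<times> 'c))"
      unfolding vec_eq_iff
    proof
      fix e' :: "'c \<times> 'c"
      obtain a b where e': "e' = (a, b)" by (cases e')
      show "(ranking_vec pos - ranking_vec pos') $ e' = axis e 1 $ e'"
      proof (cases "a < b")
        case False
        then have "e' \<noteq> e" using e e' ij by auto
        then show ?thesis using False unfolding e' ranking_vec_def axis_def by simp
      next
        case True
        show ?thesis
        proof (cases "e' = e")
          case True
          then show ?thesis unfolding e e' ranking_vec_def axis_def pos_def pos'_def
            using ij by simp
        next
          case False
          have "(pos a < pos b) = (pos' a < pos' b)"
            using False True ij t2[of a] t2[of b] tinj[of a b] unfolding e e' pos_def pos'_def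
            by auto
          then show ?thesis using False True unfolding e' ranking_vec_def axis_def by simp
        qed
      qed
    qed
    moreover have "ranking_vec pos - ranking_vec pos' = (ranking_vec pos - a0) - (ranking_vec pos' - a0)"
      by simp
    moreover have "ranking_vec pos - a0 \<in> D" "ranking_vec pos' - a0 \<in> D"
      using r1 r2 unfolding D_def by auto
    ultimately show ?thesis using subspace_diff[OF sD] by metis
  qed
  show "pair_space \<subseteq> A"
  proof
    fix v :: "real ^ ('c \<times> 'c)" assume v: "v \<in> pair_space"
    have "a0 \<in> pair_space" using a0 ranking_vecs_pair by auto
    then have "v - a0 \<in> pair_space" by (rule subspace_diff[OF subspace_pair_space v])
    then have "v - a0 = (\<Sum>e\<in>{e. fst e < snd e}. (v - a0) $ e *\<^sub>R axis e 1)"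
      by (rule pair_space_sum)
    also have "\<dots> \<in> D" using sD ax by (intro subspace_sum subspace_scale) auto
    finally have "v - a0 \<in> D" .
    then obtain y where "y \<in> A" "v - a0 = y - a0" unfolding D_def by auto
    then show "v \<in> A" by simp
  qed
qed

lemma Co_HR_eq: "Co_HR = rel_interior (linear_ordering_polytope :: (real ^ ('c::{finite,linorder} \<times> 'c)) set)"
  unfolding Co_HR_def rel_interior_def interior_of_def linear_ordering_polytope_def
    affine_hull_convex_hull affine_hull_rv ..


lemma pos_comb_rel_interior:
  fixes V :: "'a::euclidean_space set"
  assumes fin: "finite V" and ne: "V \<noteq> {}" and wpos: "\<forall>v\<in>V. 0 < w v" and ws: "sum w V = 1"
  shows "(\<Sum>v\<in>V. w v *\<^sub>R v) \<in> rel_interior (convex hull V)"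
proof -
  let ?P = "convex hull V"
  have cP: "convex ?P" by (rule convex_convex_hull)
  have "?P \<noteq> {}" using ne by simp
  then have "rel_interior ?P \<noteq> {}" using rel_interior_eq_empty[OF cP] by simp
  then obtain c where c: "c \<in> rel_interior ?P" by blast
  then have "c \<in> ?P" using rel_interior_subset by blast
  then obtain \<mu> where mu0: "\<forall>v\<in>V. 0 \<le> \<mu> v" and mus: "sum \<mu> V = 1"
    and muc: "(\<Sum>v\<in>V. \<mu> v *\<^sub>R v) = c"
    using convex_hull_finite[OF fin] by auto
  define \<delta> where "\<delta> = Min (w ` V)"
  have dpos: "0 < \<delta>" using wpos fin ne by (simp add: \<delta>_def Min_gr_iff)
  have dle: "\<delta> \<le> w v" if "v \<in> V" for v using that fin by (simp add: \<delta>_def)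
  have mule: "\<mu> v \<le> 1" if "v \<in> V" for v
  proof -
    have "\<mu> v \<le> sum \<mu> V" by (rule member_le_sum) (use that mu0 fin in auto)
    then show ?thesis using mus by simp
  qed
  obtain v1 where v1: "v1 \<in> V" using ne by blast
  have wle: "w v1 \<le> 1"
  proof -
    have "w v1 \<le> sum w V" by (rule member_le_sum) (use v1 wpos fin in \<open>auto intro: less_imp_le\<close>)
    then show ?thesis using ws by simp
  qed
  define e where "e = \<delta> / 2"
  have e0: "0 < e" using dpos e_def by simp
  have e1: "e < 1" using dle[OF v1] wle dpos e_def by simp
  define z where "z = (\<Sum>v\<in>V. ((w v - e * \<mu> v) / (1 - e)) *\<^sub>R v)"
  have coef: "0 \<le> (w v - e * \<mu> v) / (1 - e)" if "v \<in> V" for v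
  proof -
    have "e * \<mu> v \<le> e * 1" using mule[OF that] e0 by (intro mult_left_mono) auto
    also have "\<dots> \<le> w v" using dle[OF that] e_def dpos by simp
    finally show ?thesis using e1 by simp
  qed
  have coefs: "(\<Sum>v\<in>V. (w v - e * \<mu> v) / (1 - e)) = 1"
  proof -
    have s1: "(\<Sum>v\<in>V. (w v - e * \<mu> v)) = sum w V - e * sum \<mu> V"
      by (simp add: sum_subtractf sum_distrib_left)
    have s2: "(\<Sum>v\<in>V. (w v - e * \<mu> v)) = 1 - e" using s1 ws mus by simp
    have "(\<Sum>v\<in>V. (w v - e * \<mu> v) / (1 - e)) = (\<Sum>v\<in>V. (w v - e * \<mu> v)) / (1 - e)"
      by (rule sum_divide_distrib[symmetric])
    also have "\<dots> = (1 - e) / (1 - e)" by (simp only: s2)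
    also have "\<dots> = 1" using e1 by simp
    finally show ?thesis .
  qed
  have zP: "z \<in> ?P" unfolding convex_hull_finite[OF fin] z_def
    by (rule CollectI, rule exI[of _ "\<lambda>v. (w v - e * \<mu> v) / (1 - e)"]) (use coef coefs in auto)
  have "z - e *\<^sub>R (z - c) \<in> rel_interior ?P"
    by (rule rel_interior_closure_convex_shrink[OF cP c]) (use zP closure_subset e0 e1 in auto)
  moreover have "z - e *\<^sub>R (z - c) = (\<Sum>v\<in>V. w v *\<^sub>R v)"
  proof -
    have "(1 - e) *\<^sub>R z = (\<Sum>v\<in>V. (w v - e * \<mu> v) *\<^sub>R v)"
      unfolding z_def scaleR_sum_right scaleR_scaleR using e1 by simp
    also have "\<dots> = (\<Sum>v\<in>V. w v *\<^sub>R v) - e *\<^sub>R c"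
      unfolding muc[symmetric] scaleR_sum_right scaleR_scaleR
      by (simp add: scaleR_left_diff_distrib sum_subtractf)
    finally have "(1 - e) *\<^sub>R z = (\<Sum>v\<in>V. w v *\<^sub>R v) - e *\<^sub>R c" .
    moreover have "z - e *\<^sub>R (z - c) = (1 - e) *\<^sub>R z + e *\<^sub>R c"
      by (simp add: algebra_simps)
    ultimately show ?thesis by simp
  qed
  ultimately show ?thesis by simp
qed


definition bt :: "('c::{finite,linorder} \<Rightarrow> real) \<Rightarrow> real ^ ('c \<times> 'c)" where
  "bt p = (\<chi> e. if fst e < snd e then p (fst e) / (p (fst e) + p (snd e)) else 0)"

definition Yf :: "'c set \<Rightarrow> ('c \<Rightarrow> nat) \<Rightarrow> ('c \<Rightarrow> real) \<Rightarrow> 'c \<Rightarrow> 'c \<Rightarrow> real" where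
  "Yf S q p i j = (if i \<in> S \<and> (j \<notin> S \<or> q i < q j) then 1
      else if j \<in> S \<and> (i \<notin> S \<or> q j < q i) then 0 else p i / (p i + p j))"

definition Yv :: "'c::{finite,linorder} set \<Rightarrow> ('c \<Rightarrow> nat) \<Rightarrow> ('c \<Rightarrow> real) \<Rightarrow> real ^ ('c \<times> 'c)" where
  "Yv S q p = (\<chi> e. if fst e < snd e then Yf S q p (fst e) (snd e) else 0)"

definition consis :: "'c::{finite,linorder} set \<Rightarrow> ('c \<Rightarrow> nat) \<Rightarrow> real ^ ('c \<times> 'c) \<Rightarrow> bool" where
  "consis S q v = (\<forall>i j. i \<noteq> j \<and> i \<in> S \<and> (j \<notin> S \<or> q i < q j) \<longrightarrow> pair_weight v (i, j) = 1)"

lemma Yf_step: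
  assumes "a \<notin> S" "\<forall>i\<in>S. q i < m" "i \<noteq> j"
  shows "Yf (insert a S) (q(a := m)) p i j =
    (if i \<in> S \<or> j \<in> S then Yf S q p i j else if a = i then 1 else if a = j then 0 else p i / (p i + p j))"
proof (cases "i \<in> S \<or> j \<in> S")
  case True
  show ?thesis
  proof (cases "i \<in> S")
    case iS: True
    then have "i \<noteq> a" using assms by auto
    show ?thesis
    proof (cases "j \<in> S")
      case True
      then have "j \<noteq> a" using assms by auto
      then show ?thesis using iS True \<open>i \<noteq> a\<close> unfolding Yf_def by simp
    next
      case False
      have "q i < m" using assms iS by auto
      then show ?thesis using iS False \<open>i \<noteq> a\<close> unfolding Yf_def by auto
    qed
  next
    case iS: False
    then have jS: "j \<in> S" using True by simp
    then have "j \<noteq> a" using assms by auto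
    have "q j < m" using assms jS by auto
    then show ?thesis using iS jS \<open>j \<noteq> a\<close> unfolding Yf_def by auto
  qed
next
  case False
  then show ?thesis using assms(3) unfolding Yf_def by auto
qed

lemma PL:
  fixes p :: "'c::{finite,linorder} \<Rightarrow> real"
  assumes pp: "\<forall>i. 0 < p i"
  shows "card (- S) = k \<Longrightarrow> inj_on q S \<Longrightarrow> \<exists>w. (\<forall>v\<in>ranking_vecs. 0 \<le> w v) \<and> sum w ranking_vecs = 1 \<and>
     (\<Sum>v\<in>ranking_vecs. w v *\<^sub>R v) = Yv S q p \<and> (\<forall>v\<in>ranking_vecs. consis S q v \<longrightarrow> 0 < w v)"
proof (induction k arbitrary: S q)
  case 0
  then have "- S = {}" by simp
  then have S: "S = UNIV" by blast
  have iq: "inj q" using 0 S by simp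
  define v0 where "v0 = ranking_vec q"
  have v0R: "v0 \<in> ranking_vecs" unfolding v0_def by (rule rank_lemma[OF iq])
  have Y: "Yv S q p = v0"
    unfolding vec_eq_iff
  proof
    fix e :: "'c \<times> 'c"
    obtain a b where e: "e = (a, b)" by (cases e)
    show "Yv S q p $ e = v0 $ e"
    proof (cases "a < b")
      case True
      then have "q a \<noteq> q b" using iq by (auto simp: inj_eq)
      then show ?thesis using True unfolding e Yv_def v0_def ranking_vec_def Yf_def S by auto
    next
      case False
      then show ?thesis unfolding e Yv_def v0_def ranking_vec_def by simp
    qed
  qed
  have cv: "v = v0" if vR: "v \<in> ranking_vecs" and cs: "consis S q v" for v
  proof -
    obtain pos where ip: "inj pos" and v: "v = ranking_vec pos" using ranking_vecs_inj[OF vR] by blast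
    show ?thesis unfolding vec_eq_iff
    proof
      fix e :: "'c \<times> 'c"
      obtain a b where e: "e = (a, b)" by (cases e)
      show "v $ e = v0 $ e"
      proof (cases "a < b")
        case True
        then have ab: "a \<noteq> b" by simp
        have "q a \<noteq> q b" using iq ab by (auto simp: inj_eq)
        then have "q a < q b \<or> q b < q a" by auto
        then have "(pos a < pos b) = (q a < q b)"
        proof
          assume "q a < q b"
          then have "pair_weight v (a, b) = 1" using cs ab S unfolding consis_def by auto
          then show ?thesis using pw_rank[OF ip ab] \<open>q a < q b\<close> v by (auto split: if_splits)
        next
          assume "q b < q a"
          then have "pair_weight v (b, a) = 1" using cs ab S unfolding consis_def by auto
          then show ?thesis using pw_rank[OF ip ab[symmetric]] \<open>q b < q a\<close> v by (auto split: if_splits)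
        qed
        then show ?thesis unfolding v v0_def e ranking_vec_def by simp
      next
        case False
        then show ?thesis unfolding v v0_def e ranking_vec_def by simp
      qed
    qed
  qed
  define w where "w v = (if v = v0 then 1 else (0::real))" for v
  have "(\<Sum>v\<in>ranking_vecs. w v *\<^sub>R v) = (\<Sum>v\<in>ranking_vecs. if v = v0 then v0 else 0)"
    unfolding w_def by (intro sum.cong refl) simp
  also have "\<dots> = v0" by (subst sum.delta[OF finite_ranking_vecs]) (simp add: v0R)
  finally have ws: "(\<Sum>v\<in>ranking_vecs. w v *\<^sub>R v) = Yv S q p" using Y by simp
  have w1: "sum w ranking_vecs = 1" unfolding w_def by (subst sum.delta[OF finite_ranking_vecs]) (simp add: v0R)
  show ?case
    by (rule exI[of _ w]) (use ws w1 cv in \<open>auto simp: w_def\<close>)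
next
  case (Suc k)
  let ?R = "ranking_vecs :: (real ^ ('c \<times> 'c)) set"
  have finR: "finite ?R" by (rule finite_ranking_vecs)
  have ne: "- S \<noteq> {}" using Suc.prems(1) by auto
  define m where "m = Suc (\<Sum>i\<in>S. q i)"
  have qm: "\<forall>i\<in>S. q i < m"
  proof
    fix i assume "i \<in> S"
    then have "q i \<le> (\<Sum>i\<in>S. q i)" by (intro member_le_sum) auto
    then show "q i < m" unfolding m_def by simp
  qed
  have ex: "\<forall>a\<in>- S. \<exists>w. (\<forall>v\<in>?R. 0 \<le> w v) \<and> sum w ?R = 1 \<and>
     (\<Sum>v\<in>?R. w v *\<^sub>R v) = Yv (insert a S) (q(a := m)) p \<and>
     (\<forall>v\<in>?R. consis (insert a S) (q(a := m)) v \<longrightarrow> 0 < w v)"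
  proof
    fix a assume aS: "a \<in> - S"
    show "\<exists>w. (\<forall>v\<in>?R. 0 \<le> w v) \<and> sum w ?R = 1 \<and>
     (\<Sum>v\<in>?R. w v *\<^sub>R v) = Yv (insert a S) (q(a := m)) p \<and>
     (\<forall>v\<in>?R. consis (insert a S) (q(a := m)) v \<longrightarrow> 0 < w v)"
    proof (rule Suc.IH)
      have "- insert a S = (- S) - {a}" by auto
      then show "card (- insert a S) = k" using aS Suc.prems(1) by simp
      show "inj_on (q(a := m)) (insert a S)"
      proof (rule inj_onI)
        fix x y assume x: "x \<in> insert a S" and y: "y \<in> insert a S" and xy: "(q(a := m)) x = (q(a := m)) y"
        show "x = y"
        proof (cases "x = a")
          case True
          show ?thesis
          proof (rule ccontr)
            assume "x \<noteq> y"
            then have "y \<in> S" "y \<noteq> a" using y True by auto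
            then show False using xy True qm by auto
          qed
        next
          case False
          then have xS: "x \<in> S" using x by auto
          show ?thesis
          proof (cases "y = a")
            case True
            then show ?thesis using xy False xS qm by auto
          next
            case False
            then have "y \<in> S" using y by auto
            then show ?thesis using xy \<open>x \<noteq> a\<close> False xS Suc.prems(2) by (auto simp: inj_on_def)
          qed
        qed
      qed
    qed
  qed
  from bchoice[OF ex] obtain W where W0: "\<forall>a\<in>- S. (\<forall>v\<in>?R. 0 \<le> W a v) \<and> sum (W a) ?R = 1 \<and>
     (\<Sum>v\<in>?R. W a v *\<^sub>R v) = Yv (insert a S) (q(a := m)) p \<and>
     (\<forall>v\<in>?R. consis (insert a S) (q(a := m)) v \<longrightarrow> 0 < W a v)" ..
  have W: "(\<forall>v\<in>?R. 0 \<le> W a v) \<and> sum (W a) ?R = 1 \<and>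
     (\<Sum>v\<in>?R. W a v *\<^sub>R v) = Yv (insert a S) (q(a := m)) p \<and>
     (\<forall>v\<in>?R. consis (insert a S) (q(a := m)) v \<longrightarrow> 0 < W a v)" if "a \<in> - S" for a
    using W0 that by blast
  define P where "P = sum p (- S)"
  have P0: "0 < P" unfolding P_def using ne pp by (intro sum_pos) auto
  define w where "w v = (\<Sum>a\<in>- S. (p a / P) * W a v)" for v
  have c0: "0 \<le> p a / P" for a using pp P0 by (simp add: less_imp_le)
  have w0: "\<forall>v\<in>?R. 0 \<le> w v" unfolding w_def using W c0
    by (intro ballI sum_nonneg mult_nonneg_nonneg) auto
  have psum: "(\<Sum>a\<in>- S. p a / P) = 1" using P0 unfolding P_def by (simp add: sum_divide_distrib[symmetric])
  have w1: "sum w ?R = 1"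
  proof -
    have "sum w ?R = (\<Sum>a\<in>- S. (p a / P) * sum (W a) ?R)"
      unfolding w_def by (simp add: sum.swap[of _ _ ?R] sum_distrib_left)
    also have "\<dots> = (\<Sum>a\<in>- S. p a / P)" using W by (intro sum.cong refl) auto
    finally show ?thesis using psum by simp
  qed
  have wv: "(\<Sum>v\<in>?R. w v *\<^sub>R v) = (\<Sum>a\<in>- S. (p a / P) *\<^sub>R Yv (insert a S) (q(a := m)) p)"
  proof -
    have "(\<Sum>v\<in>?R. w v *\<^sub>R v) = (\<Sum>a\<in>- S. (p a / P) *\<^sub>R (\<Sum>v\<in>?R. W a v *\<^sub>R v))"
      unfolding w_def scaleR_sum_left scaleR_sum_right scaleR_scaleR by (rule sum.swap)
    also have "\<dots> = (\<Sum>a\<in>- S. (p a / P) *\<^sub>R Yv (insert a S) (q(a := m)) p)"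
      using W by (intro sum.cong refl) auto
    finally show ?thesis .
  qed
  have Ysum: "(\<Sum>a\<in>- S. (p a / P) *\<^sub>R Yv (insert a S) (q(a := m)) p) = Yv S q p"
    unfolding vec_eq_iff
  proof
    fix e :: "'c \<times> 'c"
    obtain i j where e: "e = (i, j)" by (cases e)
    show "(\<Sum>a\<in>- S. (p a / P) *\<^sub>R Yv (insert a S) (q(a := m)) p) $ e = Yv S q p $ e"
    proof (cases "i < j")
      case False
      then show ?thesis unfolding e Yv_def by simp
    next
      case True
      then have ij: "i \<noteq> j" by simp
      have "(\<Sum>a\<in>- S. (p a / P) *\<^sub>R Yv (insert a S) (q(a := m)) p) $ e =
          (\<Sum>a\<in>- S. (p a / P) * Yf (insert a S) (q(a := m)) p i j)"
        unfolding e Yv_def using True by simp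
      also have "\<dots> = Yf S q p i j"
      proof (cases "i \<in> S \<or> j \<in> S")
        case True
        have "(\<Sum>a\<in>- S. (p a / P) * Yf (insert a S) (q(a := m)) p i j)
            = (\<Sum>a\<in>- S. (p a / P) * Yf S q p i j)"
          using Yf_step[OF _ qm ij] True by (intro sum.cong refl) auto
        also have "\<dots> = Yf S q p i j" by (simp only: sum_distrib_right[symmetric] psum mult_1_left)
        finally show ?thesis .
      next
        case False
        define B where "B = p i / (p i + p j)"
        have YB: "Yf S q p i j = B" using False unfolding Yf_def B_def by auto
        have iS: "i \<in> - S" and jS: "j \<in> - S" using False by auto
        have "(\<Sum>a\<in>- S. (p a / P) * Yf (insert a S) (q(a := m)) p i j)
            = (\<Sum>a\<in>- S. (p a / P) * B + (if a = i then (p i / P) * (1 - B) else 0)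
                 + (if a = j then - (p j / P) * B else 0))"
        proof (intro sum.cong refl)
          fix a assume "a \<in> - S"
          then show "(p a / P) * Yf (insert a S) (q(a := m)) p i j =
            (p a / P) * B + (if a = i then (p i / P) * (1 - B) else 0) + (if a = j then - (p j / P) * B else 0)"
            using Yf_step[OF _ qm ij, of a p] False ij unfolding B_def
            by (auto simp: algebra_simps)
        qed
        also have "\<dots> = B * (\<Sum>a\<in>- S. p a / P) + (p i / P) * (1 - B) - (p j / P) * B"
          using iS jS by (simp add: sum.distrib sum_distrib_left mult.commute)
        also have "\<dots> = B + ((p i * (1 - B) - p j * B) / P)" using psum by (simp add: diff_divide_distrib)
        also have "p i * (1 - B) - p j * B = 0"
        proof -
          have "p i + p j > 0" using pp by (simp add: add_pos_pos)
          then show ?thesis unfolding B_def by (simp add: field_simps)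
        qed
        also have "B + 0 / P = B" by simp
        finally show ?thesis unfolding YB .
      qed
      also have "\<dots> = Yv S q p $ e" unfolding e Yv_def using True by simp
      finally show ?thesis .
    qed
  qed
  have wpos: "0 < w v" if vR: "v \<in> ?R" and cs: "consis S q v" for v
  proof -
    obtain pos where ip: "inj pos" and v: "v = ranking_vec pos" using ranking_vecs_inj[OF vR] by blast
    obtain a0 where "a0 \<in> - S" using ne by blast
    obtain a where aS: "a \<in> - S" and amin: "\<And>b. b \<in> - S \<Longrightarrow> pos a \<le> pos b"
      using ex_has_least_nat[of "\<lambda>x. x \<in> - S" a0 pos] \<open>a0 \<in> - S\<close> by blast
    have "consis (insert a S) (q(a := m)) v" unfolding consis_def
    proof (intro allI impI)
      fix i j assume H: "i \<noteq> j \<and> i \<in> insert a S \<and> (j \<notin> insert a S \<or> (q(a := m)) i < (q(a := m)) j)"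
      show "pair_weight v (i, j) = 1"
      proof (cases "i = a")
        case True
        have "j \<notin> insert a S"
        proof
          assume "j \<in> insert a S"
          then have "j \<in> S" using H True by auto
          then have "q j < m" using qm by auto
          moreover have "(q(a := m)) i < (q(a := m)) j" using H \<open>j \<in> insert a S\<close> by auto
          moreover have "j \<noteq> a" using \<open>j \<in> S\<close> aS by blast
          ultimately show False using True by simp
        qed
        then have "j \<in> - S" "j \<noteq> a" by auto
        then have "pos a \<le> pos j" using amin by auto
        moreover have "pos a \<noteq> pos j" using ip \<open>j \<noteq> a\<close> by (auto simp: inj_eq)
        ultimately have "pos i < pos j" using True by simp
        then show ?thesis using pw_rank[OF ip, of i j] H v by simp
      next
        case False
        then have iS: "i \<in> S" using H by auto
        have "j \<notin> S \<or> q i < q j"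
        proof (cases "j = a")
          case True then show ?thesis using aS by auto
        next
          case False
          then show ?thesis using H \<open>i \<noteq> a\<close> by auto
        qed
        then show ?thesis using cs iS H unfolding consis_def by auto
      qed
    qed
    then have "0 < W a v" using W[OF aS] vR by auto
    then have "0 < (p a / P) * W a v" using pp P0 by simp
    then show ?thesis unfolding w_def
    proof (rule sum_pos2[OF finite aS])
      fix b assume "b \<in> - S"
      then have "0 \<le> W b v" using W vR by blast
      show "0 \<le> p b / P * W b v" using c0[of b] \<open>0 \<le> W b v\<close> by (rule mult_nonneg_nonneg)
    qed
  qed
  show ?case
    by (rule exI[of _ w]) (use w0 w1 wv Ysum wpos in auto)
qed


lemma bt_interior:
  fixes p :: "'c::{finite,linorder} \<Rightarrow> real"
  assumes pp: "\<forall>i. 0 < p i"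
  shows "bt p \<in> rel_interior linear_ordering_polytope"
proof -
  obtain w where w0: "\<forall>v\<in>ranking_vecs. 0 \<le> w v" and w1: "sum w ranking_vecs = 1"
    and wv: "(\<Sum>v\<in>ranking_vecs. w v *\<^sub>R v) = Yv {} (\<lambda>_. 0) p"
    and wp: "\<forall>v\<in>ranking_vecs. consis {} (\<lambda>_. 0) v \<longrightarrow> 0 < w v"
    using PL[OF pp, of "{}" "card (- ({}::'c set))" "\<lambda>_. 0"] by auto
  have Y: "Yv {} (\<lambda>_. 0) p = bt p" unfolding Yv_def bt_def Yf_def vec_eq_iff by auto
  have wpos: "\<forall>v\<in>ranking_vecs. 0 < w v" using wp unfolding consis_def by simp
  have "(\<Sum>v\<in>ranking_vecs. w v *\<^sub>R v) \<in> rel_interior (convex hull ranking_vecs)"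
    by (rule pos_comb_rel_interior[OF finite_ranking_vecs ranking_vecs_ne wpos w1])
  then show ?thesis using wv Y unfolding linear_ordering_polytope_def by simp
qed

lemma pw_sum:
  fixes p :: "nat \<Rightarrow> 'c::{finite,linorder} \<Rightarrow> real"
  assumes pp: "\<forall>u<k. \<forall>i. 0 < p u i" and ds: "(\<Sum>u<k. d u) = 1" and ij: "i \<noteq> j"
  shows "pair_weight (\<Sum>u<k. d u *\<^sub>R bt (p u)) (i, j) = overall_opinion k p d (i, j)"
proof (cases "i < j")
  case True
  then show ?thesis unfolding pair_weight_def overall_opinion_def bt_def by simp
next
  case False
  then have ji: "j < i" using ij by simp
  have "pair_weight (\<Sum>u<k. d u *\<^sub>R bt (p u)) (i, j) = 1 - (\<Sum>u<k. d u * (p u j / (p u j + p u i)))"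
    unfolding pair_weight_def bt_def using False ji by simp
  also have "\<dots> = (\<Sum>u<k. d u) - (\<Sum>u<k. d u * (p u j / (p u j + p u i)))" using ds by simp
  also have "\<dots> = (\<Sum>u<k. d u * (1 - p u j / (p u j + p u i)))"
    by (simp add: sum_subtractf[symmetric] right_diff_distrib)
  also have "\<dots> = (\<Sum>u<k. d u * (p u i / (p u i + p u j)))"
  proof (intro sum.cong refl)
    fix u assume "u \<in> {..<k}"
    then have "0 < p u i" "0 < p u j" using pp by auto
    then have "1 - p u j / (p u j + p u i) = p u i / (p u i + p u j)" by (simp add: field_simps)
    then show "d u * (1 - p u j / (p u j + p u i)) = d u * (p u i / (p u i + p u j))" by simp
  qed
  finally show ?thesis unfolding overall_opinion_def by simp
qed

lemma lt1:
  fixes p :: "'c::finite \<Rightarrow> real"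
  assumes pp: "\<forall>i. 0 < p i" and s1: "sum p UNIV = 1" and c2: "CARD('c) \<ge> 2"
  shows "p i < 1"
proof -
  have "card (UNIV - {i}) \<ge> 1" using c2 by (simp add: card_Diff_singleton)
  then have ne: "UNIV - {i} \<noteq> {}" by (metis card.empty not_one_le_zero)
  have "0 < sum p (UNIV - {i})" using ne pp by (intro sum_pos) auto
  moreover have "sum p UNIV = p i + sum p (UNIV - {i})" by (simp add: sum.remove)
  ultimately show ?thesis using s1 by simp
qed

lemma bt_scale:
  fixes p :: "'c::{finite,linorder} \<Rightarrow> real"
  assumes pp: "\<forall>i. 0 < p i" and c: "0 < c"
  shows "bt (\<lambda>i. p i / c) = bt p"
  unfolding bt_def vec_eq_iff
proof
  fix e :: "'c \<times> 'c"
  have "0 < p (fst e)" "0 < p (snd e)" using pp by auto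
  then have "p (fst e) / c / (p (fst e) / c + p (snd e) / c) = p (fst e) / (p (fst e) + p (snd e))"
    using c by (simp add: field_simps)
  then show "(\<chi> e. if fst e < snd e then p (fst e) / c / (p (fst e) / c + p (snd e) / c) else 0) $ e =
    (\<chi> e. if fst e < snd e then p (fst e) / (p (fst e) + p (snd e)) else 0) $ e" by simp
qed

lemma pow_lim: "0 < d \<Longrightarrow> (\<lambda>m. ((1/2::real) ^ m) ^ d) \<longlonglongrightarrow> 0"
proof -
  assume d: "0 < d"
  have "(\<lambda>m. (1/2::real) ^ m) \<longlonglongrightarrow> 0" by (rule LIMSEQ_power_zero) simp
  then have "(\<lambda>m. ((1/2::real) ^ m) ^ d) \<longlonglongrightarrow> 0 ^ d" by (rule tendsto_power)
  moreover have "(0::real) ^ d = 0" using d by simp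
  ultimately show ?thesis by metis
qed

lemma frac1:
  fixes A t :: real
  assumes "0 < A" "0 \<le> t"
  shows "A / (A + t * A) = 1 / (1 + t)"
proof -
  have "A + t * A = A * (1 + t)" by (simp add: algebra_simps)
  then show ?thesis using assms by simp
qed

lemma frac2:
  fixes A t :: real
  assumes "0 < A" "0 \<le> t"
  shows "t * A / (t * A + A) = t / (t + 1)"
proof -
  have "t * A + A = A * (t + 1)" by (simp add: algebra_simps)
  then show ?thesis using assms by simp
qed

lemma rv_closure:
  assumes c2: "CARD('c::{finite,linorder}) \<ge> 2" and vR: "(v :: real ^ ('c \<times> 'c)) \<in> ranking_vecs"
  shows "v \<in> closure {bt p | p. (\<forall>i. 0 < p i \<and> p i < 1) \<and> sum p UNIV = 1}"
proof -
  obtain pos where ip: "inj pos" and v: "v = ranking_vec pos" using ranking_vecs_inj[OF vR] by blast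
  define s where "s m = (1/2::real) ^ m" for m :: nat
  have s0: "0 < s m" for m unfolding s_def by simp
  define f where "f m = bt (\<lambda>i. s m ^ pos i)" for m
  define Z where "Z m = (\<Sum>c\<in>UNIV. s m ^ pos c)" for m
  have Z0: "0 < Z m" for m unfolding Z_def using s0 by (intro sum_pos) auto
  have fB: "f m \<in> {bt p | p. (\<forall>i. 0 < p i \<and> p i < 1) \<and> sum p UNIV = 1}" for m
  proof -
    define q where "q i = s m ^ pos i / Z m" for i
    have q0: "\<forall>i. 0 < q i" unfolding q_def using s0 Z0 by simp
    have q1: "sum q UNIV = 1" unfolding q_def Z_def using Z0[of m]
      by (simp add: sum_divide_distrib[symmetric] Z_def)
    have "\<forall>i. q i < 1" using lt1[OF q0 q1 c2] by blast
    moreover have "f m = bt q" unfolding f_def q_def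
      by (rule bt_scale[symmetric]) (use s0 Z0 in auto)
    ultimately show ?thesis using q0 q1 by blast
  qed
  have lim: "f \<longlonglongrightarrow> v"
  proof (rule vec_tendstoI)
    fix e :: "'c \<times> 'c"
    obtain a b where e: "e = (a, b)" by (cases e)
    show "(\<lambda>m. f m $ e) \<longlonglongrightarrow> v $ e"
    proof (cases "a < b")
      case False
      then show ?thesis unfolding f_def bt_def v ranking_vec_def e by simp
    next
      case True
      then have "a \<noteq> b" by simp
      then have pab: "pos a \<noteq> pos b" using ip by (auto simp: inj_eq)
      show ?thesis
      proof (cases "pos a < pos b")
        case lt: True
        define d where "d = pos b - pos a"
        have d0: "0 < d" using lt d_def by simp
        have eq: "f m $ e = 1 / (1 + s m ^ d)" for m
        proof -
          have pb: "s m ^ pos b = s m ^ d * s m ^ pos a" using lt d_def by (simp add: power_add[symmetric])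
          have "f m $ e = s m ^ pos a / (s m ^ pos a + s m ^ pos b)" unfolding f_def bt_def e using True by simp
          also have "\<dots> = s m ^ pos a / (s m ^ pos a + s m ^ d * s m ^ pos a)" by (simp only: pb)
          also have "\<dots> = 1 / (1 + s m ^ d)" by (rule frac1) (use s0[of m] in auto)
          finally show ?thesis .
        qed
        have "(\<lambda>m. 1 / (1 + s m ^ d)) \<longlonglongrightarrow> 1 / (1 + 0)"
          using pow_lim[OF d0] unfolding s_def by (intro tendsto_intros) auto
        then show ?thesis unfolding eq unfolding v ranking_vec_def e using True lt by simp
      next
        case gt: False
        then have gt': "pos b < pos a" using pab by simp
        define d where "d = pos a - pos b"
        have d0: "0 < d" using gt' d_def by simp
        have eq: "f m $ e = s m ^ d / (s m ^ d + 1)" for m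
        proof -
          have pa: "s m ^ pos a = s m ^ d * s m ^ pos b" using gt' d_def by (simp add: power_add[symmetric])
          have "f m $ e = s m ^ pos a / (s m ^ pos a + s m ^ pos b)" unfolding f_def bt_def e using True by simp
          also have "\<dots> = s m ^ d * s m ^ pos b / (s m ^ d * s m ^ pos b + s m ^ pos b)" by (simp only: pa)
          also have "\<dots> = s m ^ d / (s m ^ d + 1)" by (rule frac2) (use s0[of m] in auto)
          finally show ?thesis .
        qed
        have "(\<lambda>m. s m ^ d / (s m ^ d + 1)) \<longlonglongrightarrow> 0 / (0 + 1)"
          using pow_lim[OF d0] unfolding s_def by (intro tendsto_intros) auto
        then show ?thesis unfolding eq unfolding v ranking_vec_def e using True gt by simp
      qed
    qed
  qed
  show ?thesis unfolding closure_sequential using fB lim by blast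
qed


theorem theorem1:
  fixes E :: "('c::{finite,linorder} \<times> 'c) set"
    and g :: "'c \<times> 'c \<Rightarrow> real"
  assumes "CARD('c) \<ge> 2"
    and "E \<subseteq> {(i, j). i \<noteq> j}"
  shows "(\<exists>k (p :: nat \<Rightarrow> 'c \<Rightarrow> real) (d :: nat \<Rightarrow> real).
            (\<forall>u<k. (\<forall>i. 0 < p u i \<and> p u i < 1) \<and> (\<Sum>i\<in>UNIV. p u i) = 1) \<and>
            (\<forall>u<k. 0 \<le> d u) \<and> (\<Sum>u<k. d u) = 1 \<and>
            (\<forall>e\<in>E. overall_opinion k p d e = g e))
     \<longleftrightarrow> (\<exists>x\<in>Co_HR. \<forall>e\<in>E. pair_weight x e = g e)"
proof
  assume "\<exists>k (p :: nat \<Rightarrow> 'c \<Rightarrow> real) (d :: nat \<Rightarrow> real).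
            (\<forall>u<k. (\<forall>i. 0 < p u i \<and> p u i < 1) \<and> (\<Sum>i\<in>UNIV. p u i) = 1) \<and>
            (\<forall>u<k. 0 \<le> d u) \<and> (\<Sum>u<k. d u) = 1 \<and>
            (\<forall>e\<in>E. overall_opinion k p d e = g e)"
  then obtain k and p :: "nat \<Rightarrow> 'c \<Rightarrow> real" and d :: "nat \<Rightarrow> real" where
    pk: "\<forall>u<k. (\<forall>i. 0 < p u i \<and> p u i < 1) \<and> (\<Sum>i\<in>UNIV. p u i) = 1"
    and d0: "\<forall>u<k. 0 \<le> d u" and d1: "(\<Sum>u<k. d u) = 1"
    and og: "\<forall>e\<in>E. overall_opinion k p d e = g e" by blast
  define x where "x = (\<Sum>u<k. d u *\<^sub>R bt (p u))"
  have cvx: "convex (rel_interior (linear_ordering_polytope :: (real ^ ('c \<times> 'c)) set))"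
    unfolding linear_ordering_polytope_def by (intro convex_rel_interior convex_convex_hull)
  have "x \<in> rel_interior linear_ordering_polytope" unfolding x_def
  proof (rule convex_sum[OF finite_lessThan cvx d1])
    fix u assume "u \<in> {..<k}"
    then show "0 \<le> d u" using d0 by auto
    show "bt (p u) \<in> rel_interior linear_ordering_polytope"
      using pk \<open>u \<in> {..<k}\<close> by (intro bt_interior) auto
  qed
  then have xC: "x \<in> Co_HR" by (simp add: Co_HR_eq)
  have pp: "\<forall>u<k. \<forall>i. 0 < p u i" using pk by auto
  have "\<forall>e\<in>E. pair_weight x e = g e"
  proof
    fix e assume eE: "e \<in> E"
    obtain i j where e: "e = (i, j)" by (cases e)
    have ij: "i \<noteq> j" using eE e assms(2) by auto
    show "pair_weight x e = g e" using pw_sum[OF pp d1 ij] og eE unfolding x_def e by simp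
  qed
  then show "\<exists>x\<in>Co_HR. \<forall>e\<in>E. pair_weight x e = g e" using xC by blast
next
  assume "\<exists>x\<in>Co_HR. \<forall>e\<in>E. pair_weight x e = g e"
  then obtain x where xC: "x \<in> Co_HR" and xg: "\<forall>e\<in>E. pair_weight x e = g e" by blast
  define B where "B = {bt p | p :: 'c \<Rightarrow> real. (\<forall>i. 0 < p i \<and> p i < 1) \<and> sum p UNIV = 1}"
  define Sx where "Sx = convex hull B"
  define P where "P = (linear_ordering_polytope :: (real ^ ('c \<times> 'c)) set)"
  have cP: "convex P" unfolding P_def linear_ordering_polytope_def by simp
  have BP: "B \<subseteq> P"
  proof
    fix b assume "b \<in> B"
    then obtain p where "b = bt p" "\<forall>i. 0 < p i" unfolding B_def by auto
    then have "b \<in> rel_interior P" unfolding P_def using bt_interior by blast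
    then show "b \<in> P" using rel_interior_subset by blast
  qed
  have SP: "Sx \<subseteq> P" unfolding Sx_def by (rule hull_minimal[where S=convex, OF BP cP])
  have RS: "ranking_vecs \<subseteq> closure Sx"
  proof
    fix v :: "real ^ ('c \<times> 'c)" assume "v \<in> ranking_vecs"
    then have "v \<in> closure B" unfolding B_def by (rule rv_closure[OF assms(1)])
    moreover have "closure B \<subseteq> closure Sx" unfolding Sx_def by (intro closure_mono hull_subset)
    ultimately show "v \<in> closure Sx" by blast
  qed
  have PS: "P \<subseteq> closure Sx" unfolding P_def linear_ordering_polytope_def
    by (rule hull_minimal[where S=convex, OF RS]) (simp add: Sx_def convex_closure)
  have clP: "closed P" unfolding P_def linear_ordering_polytope_def
    by (intro compact_imp_closed compact_convex_hull finite_imp_compact finite_ranking_vecs)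
  have "closure Sx \<subseteq> P" by (rule closure_minimal[OF SP clP])
  then have "closure Sx = P" using PS by blast
  then have "rel_interior P = rel_interior Sx"
    using convex_rel_interior_closure[of Sx] unfolding Sx_def by simp
  then have "x \<in> Sx" using xC rel_interior_subset unfolding Co_HR_eq P_def by blast
  then obtain k u y where uy: "\<forall>i\<in>{1::nat..k}. 0 \<le> u i \<and> y i \<in> B"
    and u1: "sum u {1..k} = 1" and xs: "(\<Sum>i = 1..k. u i *\<^sub>R y i) = x"
    unfolding Sx_def convex_hull_indexed by blast
  have "\<forall>i\<in>{1..k}. \<exists>q. y i = bt q \<and> (\<forall>c. 0 < q c \<and> q c < 1) \<and> sum q UNIV = 1"
    using uy unfolding B_def by blast
  from bchoice[OF this] obtain Q where
    Q: "\<forall>i\<in>{1..k}. y i = bt (Q i) \<and> (\<forall>c. 0 < Q i c \<and> Q i c < 1) \<and> sum (Q i) UNIV = 1" ..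
  define p where "p v = Q (Suc v)" for v
  define d where "d v = u (Suc v)" for v
  have pk: "\<forall>v<k. (\<forall>i. 0 < p v i \<and> p v i < 1) \<and> (\<Sum>i\<in>UNIV. p v i) = 1"
    using Q unfolding p_def by auto
  have d0: "\<forall>v<k. 0 \<le> d v" using uy unfolding d_def by auto
  have d1: "(\<Sum>v<k. d v) = 1" using u1 unfolding d_def by (simp add: sum.atLeast1_atMost_eq)
  have xeq: "x = (\<Sum>v<k. d v *\<^sub>R bt (p v))"
  proof -
    have "x = (\<Sum>v<k. u (Suc v) *\<^sub>R y (Suc v))" using xs by (simp add: sum.atLeast1_atMost_eq)
    also have "\<dots> = (\<Sum>v<k. d v *\<^sub>R bt (p v))"
      using Q unfolding d_def p_def by (intro sum.cong refl) auto
    finally show ?thesis .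
  qed
  have pp: "\<forall>v<k. \<forall>i. 0 < p v i" using pk by auto
  have "\<forall>e\<in>E. overall_opinion k p d e = g e"
  proof
    fix e assume eE: "e \<in> E"
    obtain i j where e: "e = (i, j)" by (cases e)
    have ij: "i \<noteq> j" using eE e assms(2) by auto
    show "overall_opinion k p d e = g e" using pw_sum[OF pp d1 ij] xg eE xeq unfolding e by simp
  qed
  then show "\<exists>k (p :: nat \<Rightarrow> 'c \<Rightarrow> real) (d :: nat \<Rightarrow> real).
            (\<forall>u<k. (\<forall>i. 0 < p u i \<and> p u i < 1) \<and> (\<Sum>i\<in>UNIV. p u i) = 1) \<and>
            (\<forall>u<k. 0 \<le> d u) \<and> (\<Sum>u<k. d u) = 1 \<and>
            (\<forall>e\<in>E. overall_opinion k p d e = g e)"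
    using pk d0 d1 by blast
qed

end
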